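(* Let $\langle X,\tau\rangle$ be a topological space. (a) If $Y\subseteq X$ and the subspace $\langle Y,\tau\restriction Y\rangle$ has a Noetherian base, then $Y$ has a Noetherian outer base in $X$. (b) Every point $p\in X$ has a Noetherian neighbourhood base (i.e. a family of open sets containing $p$, forming a neighbourhood base at $p$, with no infinite strictly $\subseteq$-increasing sequence). (c) If $Y,Z\subseteq X$ both have Noetherian outer bases in $X$, then $Y\cup Z$ also has a Noetherian outer base in $X$.
   Context: A family $\mathcal G$ of sets is Noetherian if $\langle\mathcal G,\subseteq\rangle$ contains no infinite strictly increasing sequence; a Noetherian base is a base which is Noetherian. For $Y\subseteq X$, a family $\mathcal B\subseteq\tau$ is an outer base of $Y$ in $X$ if for every $p\in Y$ the family $\{G\in\mathcal B: p\in G\}$ is a neighbourhood base of $p$ in $X$. A Noetherian outer base is an outer base which is Noetherian. *)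

theory Defs
  imports "HOL-Analysis.Analysis"
begin

definition noetherian_family :: "'a set set \<Rightarrow> bool" where
  "noetherian_family G \<longleftrightarrow>
     \<not> (\<exists>f :: nat \<Rightarrow> 'a set. (\<forall>n. f n \<in> G) \<and> (\<forall>n. f n \<subset> f (Suc n)))"

definition is_base :: "'a topology \<Rightarrow> 'a set set \<Rightarrow> bool" where
  "is_base X B \<longleftrightarrow> (\<forall>G\<in>B. openin X G) \<and>
     (\<forall>U. openin X U \<longrightarrow> (\<exists>C\<subseteq>B. \<Union>C = U))"

definition nbhd_base :: "'a topology \<Rightarrow> 'a \<Rightarrow> 'a set set \<Rightarrow> bool" where
  "nbhd_base X p N \<longleftrightarrow> (\<forall>G\<in>N. openin X G \<and> p \<in> G) \<and>
     (\<forall>U. openin X U \<and> p \<in> U \<longrightarrow> (\<exists>G\<in>N. G \<subseteq> U))"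

definition outer_base :: "'a topology \<Rightarrow> 'a set \<Rightarrow> 'a set set \<Rightarrow> bool" where
  "outer_base X Y B \<longleftrightarrow> (\<forall>G\<in>B. openin X G) \<and>
     (\<forall>p\<in>Y. nbhd_base X p {G\<in>B. p \<in> G})"

end

theory Submission
  imports Defs
begin

lemma wo_exists: "\<exists>R::'b rel. wf R \<and> (\<forall>x y. x \<noteq> y \<longrightarrow> (x,y)\<in>R \<or> (y,x)\<in>R)"
proof -
  obtain r :: "'b rel" where wr: "Well_order r \<and> Field r = UNIV"
    using well_ordering by (rule exE)
  have wo: "Well_order r" using wr by (rule conjunct1)
  have univ: "Field r = UNIV" using wr by (rule conjunct2)
  have w: "wf (r - Id)" using wo by (simp add: order_on_defs)
  have t: "Total r" using wo by (simp add: order_on_defs)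
  have t2: "\<forall>x y. x \<noteq> y \<longrightarrow> (x,y)\<in>r - Id \<or> (y,x)\<in>r - Id"
  proof (intro allI impI)
    fix x y :: 'b assume "x \<noteq> y"
    thus "(x,y)\<in>r - Id \<or> (y,x)\<in>r - Id" using t univ unfolding total_on_def by simp
  qed
  show ?thesis using w t2 by (intro exI[of _ "r - Id"] conjI)
qed

lemma noeth_mono:
  assumes nb: "noetherian_family B" and inB: "\<And>n. g n \<in> B" and mono: "\<And>n. g n \<subseteq> g (Suc n)"
  shows "\<exists>N. \<forall>n\<ge>N. g n = g N"
proof (rule ccontr)
  assume "\<not> ?thesis"
  hence ex: "\<forall>N. \<exists>n\<ge>N. g n \<noteq> g N" by blast
  have mono': "g m \<subseteq> g n" if "m \<le> n" for m n
    using that by (induction rule: dec_induct) (use mono in blast)+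
  define nx where "nx N = (SOME n. n \<ge> N \<and> g N \<subset> g n)" for N
  have nx: "nx N \<ge> N \<and> g N \<subset> g (nx N)" for N
  proof -
    obtain n where "n \<ge> N" "g n \<noteq> g N" using ex by blast
    hence "n \<ge> N \<and> g N \<subset> g n" using mono'[of N n] by blast
    thus ?thesis unfolding nx_def by (rule someI)
  qed
  define h where "h k = (nx ^^ k) 0" for k
  have "\<forall>k. g (h k) \<in> B" using inB by blast
  moreover have "\<forall>k. g (h k) \<subset> g (h (Suc k))" using nx by (simp add: h_def)
  ultimately have "\<exists>f. (\<forall>n. f n \<in> B) \<and> (\<forall>n. f n \<subset> f (Suc n))"
    by (intro exI[of _ "\<lambda>k. g (h k)"] conjI)
  with nb[unfolded noetherian_family_def] show False by (rule notE)
qed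

lemma noeth_subset: "noetherian_family B \<Longrightarrow> C \<subseteq> B \<Longrightarrow> noetherian_family C"
  unfolding noetherian_family_def by blast

lemma noeth_Un:
  assumes "noetherian_family B" "noetherian_family C"
  shows "noetherian_family (B \<union> C)"
  unfolding noetherian_family_def
proof
  assume "\<exists>f. (\<forall>n. f n \<in> B \<union> C) \<and> (\<forall>n. f n \<subset> f (Suc n))"
  then obtain f where f: "\<And>n. f n \<in> B \<union> C" "\<And>n. f n \<subset> f (Suc n)" by blast
  have sm: "strict_mono f" using f(2) by (rule strict_monoI_Suc)
  show False
  proof (cases "infinite {n. f n \<in> B}")
    case True
    define e where "e = enumerate {n. f n \<in> B}"
    have "strict_mono e" using True by (simp add: e_def strict_mono_enumerate)
    hence "\<forall>n. f (e n) \<subset> f (e (Suc n))" using sm by (simp add: strict_mono_def)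
    moreover have "\<forall>n. f (e n) \<in> B" using True enumerate_in_set e_def by blast
    ultimately show False using assms(1) unfolding noetherian_family_def
      by (metis comp_apply)
  next
    case False
    hence inf: "infinite {n. f n \<in> C}"
    proof -
      have "{n. f n \<in> B} \<union> {n. f n \<in> C} = UNIV" using f(1) by blast
      thus ?thesis using False by (metis finite_UnI infinite_UNIV_nat)
    qed
    define e where "e = enumerate {n. f n \<in> C}"
    have "strict_mono e" using inf by (simp add: e_def strict_mono_enumerate)
    hence "\<forall>n. f (e n) \<subset> f (e (Suc n))" using sm by (simp add: strict_mono_def)
    moreover have "\<forall>n. f (e n) \<in> C" using inf enumerate_in_set e_def by blast
    ultimately show False using assms(2) unfolding noetherian_family_def
      by (metis comp_apply)
  qed
qed


lemma part_a:
  fixes X :: "'a topology"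
  assumes Ysub: "Y \<subseteq> topspace X" and bB: "is_base (subtopology X Y) B" and nB: "noetherian_family B"
  shows "\<exists>A. outer_base X Y A \<and> noetherian_family A"
proof -
  obtain R :: "'a set rel" where RR: "wf R \<and> (\<forall>x y. x \<noteq> y \<longrightarrow> (x,y)\<in>R \<or> (y,x)\<in>R)"
    using wo_exists by (rule exE)
  have wfR: "wf R" using RR by (rule conjunct1)
  have tot: "(x,y)\<in>R \<or> (y,x)\<in>R" if "x \<noteq> y" for x y using RR that by simp
  define A where "A = {U. openin X U \<and> U \<inter> Y \<in> B \<and>
      (\<forall>V. openin X V \<and> V \<subseteq> U \<and> V \<inter> Y = U \<inter> Y \<longrightarrow> (V,U) \<notin> R)}"
  have bBo: "\<And>G. G \<in> B \<Longrightarrow> openin (subtopology X Y) G"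
    using bB by (simp add: is_base_def)
  have bBc: "\<And>U. openin (subtopology X Y) U \<Longrightarrow> \<exists>C\<subseteq>B. \<Union>C = U"
    using bB by (simp add: is_base_def)
  have openA: "\<forall>G\<in>A. openin X G" by (simp add: A_def)
  have key: "\<exists>U\<in>A. p \<in> U \<and> U \<subseteq> Ob" if pY: "p \<in> Y" and hO: "openin X Ob \<and> p \<in> Ob" for p Ob
  proof -
    have "openin X Ob" using hO by simp
    hence "openin (subtopology X Y) (Ob \<inter> Y)" by (rule openin_subtopology_Int)
    hence "\<exists>C\<subseteq>B. \<Union>C = Ob \<inter> Y" by (rule bBc)
    then obtain C where CB: "C \<subseteq> B" and CU: "\<Union>C = Ob \<inter> Y" by auto
    have "p \<in> \<Union>C" using CU hO pY by simp
    then obtain G where GC: "G \<in> C" and pG: "p \<in> G" by blast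
    have GB: "G \<in> B" using GC CB by blast
    have "G \<subseteq> \<Union>C" using GC by blast
    hence GO: "G \<subseteq> Ob \<inter> Y" using CU by simp
    have "openin (subtopology X Y) G" using GB by (rule bBo)
    then obtain W where W: "openin X W" "G = W \<inter> Y" by (auto simp: openin_subtopology)
    define S where "S = {V. openin X V \<and> V \<subseteq> Ob \<and> V \<inter> Y = G}"
    have "Ob \<inter> W \<in> S" using W hO GO by (auto simp: S_def)
    then obtain U where US: "U \<in> S" and Umin: "\<forall>V. (V,U) \<in> R \<longrightarrow> V \<notin> S"
      using wfE_min[OF wfR] by blast
    have "\<forall>V. openin X V \<and> V \<subseteq> U \<and> V \<inter> Y = U \<inter> Y \<longrightarrow> (V,U) \<notin> R"
    proof (intro allI impI)
      fix V assume V: "openin X V \<and> V \<subseteq> U \<and> V \<inter> Y = U \<inter> Y"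
      hence "V \<in> S" using US by (auto simp: S_def)
      thus "(V,U) \<notin> R" using Umin by blast
    qed
    moreover have "openin X U" "U \<inter> Y \<in> B" using US GB by (auto simp: S_def)
    ultimately have "U \<in> A" unfolding A_def by blast
    moreover have "p \<in> U" using US pG by (auto simp: S_def)
    moreover have "U \<subseteq> Ob" using US by (simp add: S_def)
    ultimately show ?thesis by blast
  qed
  have ob: "outer_base X Y A"
    unfolding outer_base_def nbhd_base_def using openA key by fastforce
  have "noetherian_family A"
    unfolding noetherian_family_def
  proof
    assume "\<exists>f. (\<forall>n. f n \<in> A) \<and> (\<forall>n. f n \<subset> f (Suc n))"
    then obtain f where fA: "\<And>n. f n \<in> A" and fs: "\<And>n. f n \<subset> f (Suc n)" by blast
    have "\<exists>N. \<forall>n\<ge>N. f n \<inter> Y = f N \<inter> Y"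
    proof (rule noeth_mono[OF nB, of "\<lambda>n. f n \<inter> Y"])
      show "f n \<inter> Y \<in> B" for n using fA[of n] unfolding A_def by blast
      show "f n \<inter> Y \<subseteq> f (Suc n) \<inter> Y" for n using fs[of n] by blast
    qed
    then obtain N where N: "\<And>n. n \<ge> N \<Longrightarrow> f n \<inter> Y = f N \<inter> Y" by blast
    have "(f (N + Suc i), f (N + i)) \<in> R" for i
    proof -
      have eq: "f (N + i) \<inter> Y = f (Suc (N + i)) \<inter> Y" using N[of "N+i"] N[of "Suc (N+i)"] by simp
      have "\<forall>V. openin X V \<and> V \<subseteq> f (Suc (N + i)) \<and> V \<inter> Y = f (Suc (N + i)) \<inter> Y \<longrightarrow> (V, f (Suc (N + i))) \<notin> R"
        using fA[of "Suc (N+i)"] unfolding A_def by blast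
      moreover have "openin X (f (N + i))" using fA[of "N+i"] unfolding A_def by blast
      ultimately have nR: "(f (N + i), f (Suc (N + i))) \<notin> R"
        using fs[of "N+i"] eq by blast
      have ne: "f (N + i) \<noteq> f (Suc (N + i))" using fs[of "N+i"] by blast
      show ?thesis using tot[OF ne] nR by simp
    qed
    moreover obtain k where "(f (N + Suc k), f (N + k)) \<notin> R"
      by (rule wf_no_infinite_down_chainE[OF wfR, of "\<lambda>i. f (N + i)"])
    ultimately show False by blast
  qed
  with ob show ?thesis by blast
qed

theorem lemma4:
  fixes X :: "'a topology"
  shows "(\<forall>Y. Y \<subseteq> topspace X \<and>
              (\<exists>B. is_base (subtopology X Y) B \<and> noetherian_family B)
            \<longrightarrow> (\<exists>B. outer_base X Y B \<and> noetherian_family B))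
       \<and> (\<forall>p\<in>topspace X. \<exists>N. nbhd_base X p N \<and> noetherian_family N)
       \<and> (\<forall>Y Z. Y \<subseteq> topspace X \<and> Z \<subseteq> topspace X \<and>
              (\<exists>B. outer_base X Y B \<and> noetherian_family B) \<and>
              (\<exists>B. outer_base X Z B \<and> noetherian_family B)
            \<longrightarrow> (\<exists>B. outer_base X (Y \<union> Z) B \<and> noetherian_family B))"
proof (intro conjI allI impI ballI)
  fix Y assume H: "Y \<subseteq> topspace X \<and> (\<exists>B. is_base (subtopology X Y) B \<and> noetherian_family B)"
  then obtain B where B1: "is_base (subtopology X Y) B" and B2: "noetherian_family B" by auto
  have "Y \<subseteq> topspace X" using H by simp
  from this B1 B2 show "\<exists>B. outer_base X Y B \<and> noetherian_family B" by (rule part_a)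
next
  fix p assume p: "p \<in> topspace X"
  have op: "openin (subtopology X {p}) {p}"
  proof -
    have "openin (subtopology X {p}) ({p} \<inter> topspace X)"
      by (rule openin_subtopology_Int2[OF openin_topspace])
    moreover have "{p} \<inter> topspace X = {p}" using p by simp
    ultimately show ?thesis by simp
  qed
  have bp: "is_base (subtopology X {p}) {{p}}"
    unfolding is_base_def
  proof (intro conjI ballI allI impI)
    fix G assume "G \<in> {{p}}"
    hence "G = {p}" by simp
    thus "openin (subtopology X {p}) G" using op by simp
  next
    fix U assume U: "openin (subtopology X {p}) U"
    have "U \<subseteq> topspace (subtopology X {p})" using openin_subset[OF U] .
    hence "U \<subseteq> {p}" by simp
    hence "U = {} \<or> U = {p}" by auto
    thus "\<exists>C\<subseteq>{{p}}. \<Union>C = U"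
    proof
      assume "U = {}" thus ?thesis by (intro exI[of _ "{}"]) simp
    next
      assume "U = {p}" thus ?thesis by (intro exI[of _ "{{p}}"]) simp
    qed
  qed
  have np: "noetherian_family {{p}}" unfolding noetherian_family_def by auto
  have sp: "{p} \<subseteq> topspace X" using p by simp
  obtain A where A: "outer_base X {p} A" "noetherian_family A"
    using part_a[OF sp bp np] by auto
  have "nbhd_base X p {G \<in> A. p \<in> G}" using A(1) unfolding outer_base_def by simp
  moreover have "noetherian_family {G \<in> A. p \<in> G}"
    by (rule noeth_subset[OF A(2)]) auto
  ultimately show "\<exists>N. nbhd_base X p N \<and> noetherian_family N" by auto
next
  fix Y Z assume H: "Y \<subseteq> topspace X \<and> Z \<subseteq> topspace X \<and>
              (\<exists>B. outer_base X Y B \<and> noetherian_family B) \<and>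
              (\<exists>B. outer_base X Z B \<and> noetherian_family B)"
  then obtain B where B: "outer_base X Y B" "noetherian_family B" by auto
  obtain C where C: "outer_base X Z C" "noetherian_family C" using H by auto
  have "outer_base X (Y \<union> Z) (B \<union> C)"
    unfolding outer_base_def
  proof (intro conjI ballI)
    fix G assume "G \<in> B \<union> C"
    thus "openin X G" using B(1) C(1) unfolding outer_base_def by auto
  next
    fix q assume q: "q \<in> Y \<union> Z"
    show "nbhd_base X q {G \<in> B \<union> C. q \<in> G}"
      unfolding nbhd_base_def
    proof (rule conjI; intro ballI allI impI)
      fix G assume "G \<in> {G \<in> B \<union> C. q \<in> G}"
      thus "openin X G \<and> q \<in> G" using B(1) C(1) unfolding outer_base_def by auto
    next
      fix U assume U: "openin X U \<and> q \<in> U"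
      show "\<exists>G\<in>{G \<in> B \<union> C. q \<in> G}. G \<subseteq> U"
      proof (cases "q \<in> Y")
        case True
        hence "nbhd_base X q {G \<in> B. q \<in> G}" using B(1) unfolding outer_base_def by simp
        hence allU: "\<forall>U. openin X U \<and> q \<in> U \<longrightarrow> (\<exists>G\<in>{G \<in> B. q \<in> G}. G \<subseteq> U)"
          unfolding nbhd_base_def by (rule conjunct2)
        have "\<exists>G\<in>{G \<in> B. q \<in> G}. G \<subseteq> U" using allU[rule_format, OF U] .
        then obtain G where "G \<in> {G \<in> B. q \<in> G}" "G \<subseteq> U" ..
        thus ?thesis by auto
      next
        case False
        hence "q \<in> Z" using q by simp
        hence "nbhd_base X q {G \<in> C. q \<in> G}" using C(1) unfolding outer_base_def by simp
        hence allU: "\<forall>U. openin X U \<and> q \<in> U \<longrightarrow> (\<exists>G\<in>{G \<in> C. q \<in> G}. G \<subseteq> U)"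
          unfolding nbhd_base_def by (rule conjunct2)
        have "\<exists>G\<in>{G \<in> C. q \<in> G}. G \<subseteq> U" using allU[rule_format, OF U] .
        then obtain G where "G \<in> {G \<in> C. q \<in> G}" "G \<subseteq> U" ..
        thus ?thesis by auto
      qed
    qed
  qed
  moreover have "noetherian_family (B \<union> C)" using B(2) C(2) by (rule noeth_Un)
  ultimately show "\<exists>B. outer_base X (Y \<union> Z) B \<and> noetherian_family B" by auto
qed

end
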